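(* The operator norm $\|\cdot\|_\infty$ is the maximum element of the class of $M$-norms $\||\cdot\||$ on $\mathbb{M}_n$ satisfying $\||A\||\le\omega_*(A)$ for all $A\in\mathbb{M}_n$.
   Context: $\mathbb{M}_n$ is the algebra of complex $n\times n$ matrices with identity $I$; $\|\cdot\|_\infty$ is the operator norm, $\omega(A)=\sup\{|\langle x,Ax\rangle|:\|x\|=1\}$ the numerical radius, and $\omega_*(Y)=\sup\{|\mathrm{Tr}(Y^*X)|:\omega(X)\le1\}$ its dual norm. A norm $\||\cdot\||$ on $\mathbb{M}_n$ is an $M$-norm if $\left\||\sum_{i=1}^k C_i^*X_iC_i\right\||\le \max_{i}\||X_i\||$ for all $k$, all $X_i$ and all $C_i$ with $\sum_{i=1}^k C_i^*C_i=I$. *)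

theory Defs
  imports "HOL-Analysis.Analysis"
begin

text \<open>Complex n x n matrices are modelled as complex^'n^'n for a finite index type 'n
  (n = CARD('n)). Vectors complex^'n carry the Euclidean (l2) norm of HOL-Analysis.\<close>

type_synonym 'n cmat = "complex^'n^'n"

definition cinner :: "complex^'n::finite \<Rightarrow> complex^'n \<Rightarrow> complex" where
  "cinner x y = (\<Sum>i\<in>UNIV. cnj (x$i) * y$i)"

definition cadj :: "'n::finite cmat \<Rightarrow> 'n cmat" where
  "cadj A = (\<chi> i j. cnj (A$j$i))"

definition mtrace :: "'n::finite cmat \<Rightarrow> complex" where
  "mtrace A = (\<Sum>i\<in>UNIV. A$i$i)"

definition cscale :: "complex \<Rightarrow> 'n::finite cmat \<Rightarrow> 'n cmat" where
  "cscale c A = (\<chi> i j. c * A$i$j)"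

definition op_norm :: "'n::finite cmat \<Rightarrow> real" where
  "op_norm A = onorm (\<lambda>x. A *v x)"

definition num_radius :: "'n::finite cmat \<Rightarrow> real" where
  "num_radius A = (SUP x\<in>{x. norm x = 1}. cmod (cinner x (A *v x)))"

definition num_radius_dual :: "'n::finite cmat \<Rightarrow> real" where
  "num_radius_dual Y = (SUP X\<in>{X. num_radius X \<le> 1}. cmod (mtrace (cadj Y ** X)))"

definition is_matrix_norm :: "('n::finite cmat \<Rightarrow> real) \<Rightarrow> bool" where
  "is_matrix_norm N \<longleftrightarrow>
     (\<forall>A. 0 \<le> N A) \<and> (\<forall>A. N A = 0 \<longleftrightarrow> A = 0) \<and>
     (\<forall>c A. N (cscale c A) = cmod c * N A) \<and>
     (\<forall>A B. N (A + B) \<le> N A + N B)"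

definition is_M_norm :: "('n::finite cmat \<Rightarrow> real) \<Rightarrow> bool" where
  "is_M_norm N \<longleftrightarrow> is_matrix_norm N \<and>
     (\<forall>(k::nat) (X::nat \<Rightarrow> 'n cmat) (C::nat \<Rightarrow> 'n cmat).
        (\<Sum>i<k. cadj (C i) ** C i) = mat 1 \<longrightarrow>
        N (\<Sum>i<k. cadj (C i) ** X i ** C i) \<le> Max ((\<lambda>i. N (X i)) ` {..<k}))"

end

theory Submission
  imports Defs
begin


definition outer :: "complex^'n::finite \<Rightarrow> complex^'n \<Rightarrow> 'n cmat" where
  "outer u v = (\<chi> i j. u$i * cnj (v$j))"

lemma cinner_add_left: "cinner (x + y) z = cinner x z + cinner y z"
  by (simp add: cinner_def sum.distrib distrib_right)
lemma cinner_add_right: "cinner x (y + z) = cinner x y + cinner x z"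
  by (simp add: cinner_def sum.distrib distrib_left)
lemma cinner_diff_left: "cinner (x - y) z = cinner x z - cinner y z"
  by (simp add: cinner_def sum_subtractf left_diff_distrib)
lemma cinner_diff_right: "cinner x (y - z) = cinner x y - cinner x z"
  by (simp add: cinner_def sum_subtractf right_diff_distrib)
lemma cinner_scale_left: "cinner (c *s x) y = cnj c * cinner x y"
  by (simp add: cinner_def sum_distrib_left mult.assoc)
lemma cinner_scale_right: "cinner x (c *s y) = c * cinner x y"
  by (simp add: cinner_def sum_distrib_left mult.left_commute)
lemma cinner_zero_left[simp]: "cinner 0 x = 0"
  by (simp add: cinner_def)
lemma cinner_zero_right[simp]: "cinner x 0 = 0"
  by (simp add: cinner_def)
lemma cinner_sum_right: "cinner x (\<Sum>i\<in>I. f i) = (\<Sum>i\<in>I. cinner x (f i))"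
  by (induct I rule: infinite_finite_induct) (auto simp: cinner_add_right)
lemma cinner_sum_left: "cinner (\<Sum>i\<in>I. f i) x = (\<Sum>i\<in>I. cinner (f i) x)"
  by (induct I rule: infinite_finite_induct) (auto simp: cinner_add_left)
lemma cinner_cnj: "cnj (cinner x y) = cinner y x"
  by (simp add: cinner_def mult.commute)

lemma Re_cinner: "Re (cinner x y) = inner x y"
  by (simp add: cinner_def inner_vec_def inner_complex_def Re_sum)

lemma norm_sq_sum: "(norm (x::complex^'n::finite))\<^sup>2 = (\<Sum>i\<in>UNIV. (cmod (x$i))\<^sup>2)"
  by (simp add: norm_vec_def L2_set_def sum_nonneg)

lemma cinner_self: "cinner x x = complex_of_real ((norm x)\<^sup>2)"
proof -
  have "cinner x x = (\<Sum>i\<in>UNIV. complex_of_real ((cmod (x$i))\<^sup>2))"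
    unfolding cinner_def by (intro sum.cong refl) (metis complex_norm_square mult.commute)
  also have "\<dots> = complex_of_real ((norm x)\<^sup>2)" by (simp add: norm_sq_sum)
  finally show ?thesis .
qed

lemma cinner_self_Re: "Re (cinner x x) = (norm x)\<^sup>2"
  by (simp add: cinner_self)

lemma norm_cscale_vec: "norm (c *s (x::complex^'n::finite)) = cmod c * norm x"
proof -
  have "(norm (c *s x))\<^sup>2 = (cmod c * norm x)\<^sup>2"
    by (simp add: norm_sq_sum power_mult_distrib norm_mult sum_distrib_left)
  thus ?thesis by (simp add: power2_eq_iff_nonneg)
qed

lemma cauchy_schwarz_c: "cmod (cinner x y) \<le> norm x * norm y"
proof (cases "cinner x y = 0")
  case True thus ?thesis by simp
next
  case False
  define c where "c = cinner x y / complex_of_real (cmod (cinner x y))"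
  have cm: "cmod c = 1" using False by (simp add: c_def norm_divide)
  have "cinner (c *s x) y = complex_of_real (cmod (cinner x y))"
    using False by (simp add: cinner_scale_left c_def field_simps)
       (metis complex_norm_square of_real_mult power2_eq_square)
  hence "cmod (cinner x y) = inner (c *s x) y"
    by (metis Re_cinner Re_complex_of_real)
  also have "\<dots> \<le> norm (c *s x) * norm y" by (rule norm_cauchy_schwarz)
  also have "\<dots> = norm x * norm y" by (simp add: norm_cscale_vec cm)
  finally show ?thesis .
qed

lemma cadj_cadj[simp]: "cadj (cadj A) = A"
  by (simp add: cadj_def vec_eq_iff)

lemma cinner_adj: "cinner x (A *v y) = cinner (cadj A *v x) y"
  unfolding cinner_def cadj_def matrix_vector_mult_def
  by (simp add: sum_distrib_left sum_distrib_right cnj_sum mult.assoc mult.left_commute)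
     (rule sum.swap)

lemma cinner_adj': "cinner (A *v x) y = cinner x (cadj A *v y)"
  by (simp add: cinner_adj)

lemma mv_cscale_vec: "A *v (c *s x) = c *s (A *v (x::complex^'n::finite))"
  by (simp add: vec_eq_iff matrix_vector_mult_def sum_distrib_left mult.left_commute)

lemma cscale_mv: "cscale c A *v x = c *s (A *v x)"
  by (simp add: vec_eq_iff matrix_vector_mult_def cscale_def sum_distrib_left mult.assoc)

lemma sum_mv: "(\<Sum>i\<in>I. M i) *v x = (\<Sum>i\<in>I. M i *v (x::complex^'n::finite))"
  by (induct I rule: infinite_finite_induct) (auto simp: matrix_vector_mult_add_rdistrib)

lemma outer_mv: "outer u v *v x = cinner v x *s u"
  by (simp add: vec_eq_iff matrix_vector_mult_def outer_def cinner_def sum_distrib_left mult.commute mult.left_commute)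

lemma mult_outer: "M ** outer u v = outer (M *v u) v"
  by (simp add: vec_eq_iff matrix_matrix_mult_def matrix_vector_mult_def outer_def sum_distrib_right mult.assoc)

lemma cadj_mult: "cadj (A ** B) = cadj B ** cadj A"
  by (simp add: vec_eq_iff matrix_matrix_mult_def cadj_def cnj_sum mult.commute)

lemma cadj_add: "cadj (A + B) = cadj A + cadj B"
  by (simp add: vec_eq_iff cadj_def)

lemma cadj_outer: "cadj (outer u v) = outer v u"
  by (simp add: vec_eq_iff cadj_def outer_def mult.commute)

lemma cadj_mat1[simp]: "cadj (mat 1) = (mat 1 :: 'n::finite cmat)"
  by (simp add: vec_eq_iff cadj_def mat_def)

lemma cscale_outer: "cscale c (outer u v) = outer (c *s u) v"
  by (simp add: vec_eq_iff cscale_def outer_def mult.assoc)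

lemma scaleR_cscale_vec: "t *\<^sub>R (x::complex^'n::finite) = complex_of_real t *s x"
  unfolding vec_eq_iff vector_scaleR_component vector_smult_component by (simp add: scaleR_conv_of_real)

lemma mv_scaleR: "A *v (t *\<^sub>R x) = t *\<^sub>R (A *v (x::complex^'n::finite))"
  by (simp add: scaleR_cscale_vec mv_cscale_vec)

lemma mat1_neq0: "(mat 1 :: 'n::finite cmat) \<noteq> 0"
proof
  assume "(mat 1 :: 'n::finite cmat) = 0"
  hence "(mat 1 :: 'n::finite cmat) $ undefined $ undefined = 0" by simp
  thus False by (simp add: mat_def)
qed

section \<open>Spectral theory\<close>

definition herm :: "'n::finite cmat \<Rightarrow> bool" where "herm H \<longleftrightarrow> cadj H = H"

definition csub :: "(complex^'n::finite) set \<Rightarrow> bool" where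
  "csub W \<longleftrightarrow> 0 \<in> W \<and> (\<forall>x\<in>W. \<forall>y\<in>W. x + y \<in> W) \<and> (\<forall>c. \<forall>x\<in>W. c *s x \<in> W)"

definition orthonormal_set :: "(complex^'n::finite) set \<Rightarrow> bool" where
  "orthonormal_set B \<longleftrightarrow> (\<forall>b\<in>B. cinner b b = 1) \<and> (\<forall>b\<in>B. \<forall>c\<in>B. b \<noteq> c \<longrightarrow> cinner b c = 0)"

lemma herm_inner: "herm H \<Longrightarrow> inner x (H *v y) = inner (H *v x) y"
  by (metis Re_cinner cinner_adj herm_def)

lemma quad_nonneg_zero:
  fixes a b :: real
  assumes "\<forall>t. 0 \<le> a*t + b*t\<^sup>2"
  shows "a = 0"
proof (rule ccontr)
  assume a: "a \<noteq> 0"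
  define d where "d = \<bar>b\<bar> + 1"
  have d: "d > 0" "b < d" by (auto simp: d_def)
  define t where "t = - a / (2*d)"
  have "a*t + b*t\<^sup>2 = a\<^sup>2 / d * (b / (4*d) - 1/2)"
    using d by (simp add: t_def field_simps power2_eq_square)
  also have "\<dots> < 0"
  proof (rule mult_pos_neg)
    show "0 < a\<^sup>2 / d" using a d by simp
    have "b / (4*d) < 1/4" using d by (simp add: field_simps)
    thus "b / (4*d) - 1/2 < 0" by simp
  qed
  finally show False using assms by (metis not_le)
qed

lemma csub_subspace: "csub W \<Longrightarrow> subspace W"
  unfolding csub_def subspace_def by (simp add: scaleR_cscale_vec)

lemma herm_eigen:
  fixes H :: "'n::finite cmat"
  assumes hH: "herm H" and W: "csub W" and inv: "\<forall>x\<in>W. H *v x \<in> W"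
    and x1: "x1 \<in> W" "x1 \<noteq> 0"
  shows "\<exists>x\<in>W. x \<noteq> 0 \<and> (\<exists>l::real. H *v x = complex_of_real l *s x)"
proof -
  have sub: "subspace W" using W by (rule csub_subspace)
  let ?S = "W \<inter> sphere 0 1"
  have cS: "compact ?S" by (rule closed_Int_compact[OF closed_subspace[OF sub] compact_sphere])
  have "(1 / norm x1) *\<^sub>R x1 \<in> ?S"
    using x1 sub by (simp add: subspace_mul)
  hence ne: "?S \<noteq> {}" by blast
  define f where "f x = inner x (H *v x)" for x
  have cont: "continuous_on ?S f"
    unfolding f_def
    by (intro continuous_on_inner continuous_on_id linear_continuous_on matrix_vector_mul_bounded_linear)
  obtain x0 where x0: "x0 \<in> ?S" and mx: "\<forall>y\<in>?S. f y \<le> f x0"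
    using continuous_attains_sup[OF cS ne cont] by blast
  define l where "l = f x0"
  have x0W: "x0 \<in> W" and nx0: "norm x0 = 1" using x0 by auto
  have fscale: "f (t *\<^sub>R y) = t\<^sup>2 * f y" for t y
    by (simp add: f_def mv_scaleR power2_eq_square)
  have key: "f y \<le> l * (norm y)\<^sup>2" if "y \<in> W" for y
  proof (cases "y = 0")
    case True thus ?thesis by (simp add: f_def)
  next
    case False
    hence ny: "norm y > 0" by simp
    have "(1 / norm y) *\<^sub>R y \<in> ?S" using that sub False by (simp add: subspace_mul)
    hence "f ((1 / norm y) *\<^sub>R y) \<le> l" using mx l_def by blast
    hence "f y / (norm y)\<^sup>2 \<le> l" by (simp add: fscale power_divide)
    thus ?thesis using ny by (simp add: field_simps)
  qed
  have hx0: "inner x0 (H *v y) = inner y (H *v x0)" for y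
    using herm_inner[OF hH] by (simp add: inner_commute)
  have lin: "inner y (l *\<^sub>R x0 - H *v x0) = 0" if yW: "y \<in> W" for y
  proof -
    have "\<forall>t. 0 \<le> (2 * inner y (l *\<^sub>R x0 - H *v x0)) * t + (l * (norm y)\<^sup>2 - f y) * t\<^sup>2"
    proof
      fix t :: real
      have "x0 + t *\<^sub>R y \<in> W" using x0W yW sub by (simp add: subspace_add subspace_mul)
      hence le: "f (x0 + t *\<^sub>R y) \<le> l * (norm (x0 + t *\<^sub>R y))\<^sup>2" by (rule key)
      have e1: "f (x0 + t *\<^sub>R y) = l + 2 * t * inner y (H *v x0) + t\<^sup>2 * f y"
        using hx0[of y] unfolding f_def l_def
        by (simp add: matrix_vector_right_distrib mv_scaleR inner_add_left inner_add_right
            power2_eq_square algebra_simps)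
      have ii: "inner x0 x0 = 1" by (metis nx0 power2_norm_eq_inner one_power2)
      have e2: "(norm (x0 + t *\<^sub>R y))\<^sup>2 = 1 + 2 * t * inner x0 y + t\<^sup>2 * (norm y)\<^sup>2"
        unfolding power2_norm_eq_inner by (simp add: ii inner_add_left inner_add_right
            power2_eq_square algebra_simps inner_commute)
      show "0 \<le> (2 * inner y (l *\<^sub>R x0 - H *v x0)) * t + (l * (norm y)\<^sup>2 - f y) * t\<^sup>2"
        using le unfolding e1 e2
        by (simp add: inner_diff_right inner_commute algebra_simps power2_eq_square)
    qed
    thus ?thesis using quad_nonneg_zero by fastforce
  qed
  define z where "z = l *\<^sub>R x0 - H *v x0"
  have "z \<in> W" unfolding z_def using x0W inv sub by (simp add: subspace_diff subspace_mul)
  hence "inner z z = 0" using lin z_def by simp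
  hence "z = 0" by simp
  hence "H *v x0 = complex_of_real l *s x0" unfolding z_def by (simp add: scaleR_cscale_vec)
  moreover have "x0 \<noteq> 0" using nx0 by auto
  ultimately show ?thesis using x0W by blast
qed

lemma common_eigen:
  fixes H K :: "'n::finite cmat"
  assumes hH: "herm H" and hK: "herm K" and comm: "H ** K = K ** H"
    and W: "csub W" and invH: "\<forall>x\<in>W. H *v x \<in> W" and invK: "\<forall>x\<in>W. K *v x \<in> W"
    and x1: "x1 \<in> W" "x1 \<noteq> 0"
  shows "\<exists>x\<in>W. x \<noteq> 0 \<and> (\<exists>a b::real. H *v x = complex_of_real a *s x \<and> K *v x = complex_of_real b *s x)"
proof -
  obtain x a where xW: "x \<in> W" "x \<noteq> 0" and xa: "H *v x = complex_of_real a *s x"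
    using herm_eigen[OF hH W invH x1] by blast
  define W' where "W' = {y\<in>W. H *v y = complex_of_real a *s y}"
  have W': "csub W'"
    using W unfolding csub_def W'_def
    by (auto simp: matrix_vector_right_distrib vector_add_ldistrib mv_cscale_vec vec.scale_left_commute)
  have invK': "\<forall>y\<in>W'. K *v y \<in> W'"
  proof
    fix y assume y: "y \<in> W'"
    have "H *v (K *v y) = K *v (H *v y)" by (simp add: matrix_vector_mul_assoc comm)
    also have "\<dots> = complex_of_real a *s (K *v y)" using y by (simp add: W'_def mv_cscale_vec)
    finally show "K *v y \<in> W'" using y invK by (simp add: W'_def)
  qed
  have "x \<in> W'" using xW xa by (simp add: W'_def)
  then obtain y b where yW: "y \<in> W'" "y \<noteq> 0" and yb: "K *v y = complex_of_real b *s y"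
    using herm_eigen[OF hK W' invK'] xW by blast
  show ?thesis using yW yb by (auto simp: W'_def)
qed

lemma orthonormal_bound:
  assumes "orthonormal_set (B :: (complex^'n::finite) set)"
  shows "finite B \<and> card B \<le> DIM(complex^'n)"
proof -
  have "pairwise orthogonal B"
    using assms unfolding orthonormal_set_def pairwise_def orthogonal_def
    by (metis Re_cinner zero_complex.simps(1))
  moreover have "0 \<notin> B" using assms unfolding orthonormal_set_def by force
  ultimately show ?thesis using independent_bound pairwise_orthogonal_independent by blast
qed

lemma expand_basis:
  assumes "finite B" "(\<Sum>b\<in>B. outer b b) = mat 1"
  shows "x = (\<Sum>b\<in>B. cinner b x *s b)"
proof -
  have "x = (\<Sum>b\<in>B. outer b b) *v x" using assms by simp
  also have "\<dots> = (\<Sum>b\<in>B. cinner b x *s b)" by (simp add: sum_mv outer_mv)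
  finally show ?thesis .
qed

lemma orthonormal_sum_coeff:
  assumes on: "orthonormal_set B" and fin: "finite B" and b: "b' \<in> B"
  shows "(\<Sum>b\<in>B. f b * cinner b' b) = f b'"
proof -
  have "(\<Sum>b\<in>B. f b * cinner b' b) = f b' * cinner b' b' + (\<Sum>b\<in>B - {b'}. f b * cinner b' b)"
    using fin b by (simp add: sum.remove)
  also have "(\<Sum>b\<in>B - {b'}. f b * cinner b' b) = 0"
    using on b unfolding orthonormal_set_def by (intro sum.neutral) auto
  finally show ?thesis using on b unfolding orthonormal_set_def by simp
qed

lemma spectral_comm:
  fixes H K :: "'n::finite cmat"
  assumes hH: "herm H" and hK: "herm K" and comm: "H ** K = K ** H"
  shows "\<exists>B. orthonormal_set B \<and> finite B \<and> (\<Sum>b\<in>B. outer b b) = mat 1 \<and>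
     (\<forall>b\<in>B. \<exists>a c::real. H *v b = complex_of_real a *s b \<and> K *v b = complex_of_real c *s b)"
proof -
  define P where "P B \<longleftrightarrow> orthonormal_set B \<and>
     (\<forall>b\<in>B. \<exists>a c::real. H *v b = complex_of_real a *s b \<and> K *v b = complex_of_real c *s b)"
    for B :: "(complex^'n) set"
  have P0: "P {}" by (simp add: P_def orthonormal_set_def)
  have bnd: "\<forall>B. P B \<longrightarrow> card B < DIM(complex^'n) + 1"
    using orthonormal_bound unfolding P_def by fastforce
  obtain B where PB: "P B" and maxB: "\<forall>B'. P B' \<longrightarrow> card B' \<le> card B"
    using ex_has_greatest_nat[of P "{}" card, OF P0 bnd] by blast
  have onB: "orthonormal_set B" and finB: "finite B" using PB orthonormal_bound by (auto simp: P_def)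
  define W where "W = {x. \<forall>b\<in>B. cinner b x = 0}"
  have W: "csub W" unfolding csub_def W_def by (simp add: cinner_add_right cinner_scale_right)
  have inv: "\<forall>x\<in>W. M *v x \<in> W" if hM: "herm M" and eig: "\<forall>b\<in>B. \<exists>a::real. M *v b = complex_of_real a *s b" for M
  proof
    fix x assume x: "x \<in> W"
    show "M *v x \<in> W" unfolding W_def
    proof (intro CollectI ballI)
      fix b assume b: "b \<in> B"
      obtain a :: real where a: "M *v b = complex_of_real a *s b" using eig b by blast
      have "cinner b (M *v x) = cinner (M *v b) x" using hM by (simp add: cinner_adj herm_def)
      also have "\<dots> = 0" using x b by (simp add: a cinner_scale_left W_def)
      finally show "cinner b (M *v x) = 0" .
    qed
  qed
  have invH: "\<forall>x\<in>W. H *v x \<in> W" using inv[OF hH] PB unfolding P_def by blast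
  have invK: "\<forall>x\<in>W. K *v x \<in> W" using inv[OF hK] PB unfolding P_def by blast
  have W0: "x = 0" if xW: "x \<in> W" for x
  proof (rule ccontr)
    assume "x \<noteq> 0"
    then obtain y a c where yW: "y \<in> W" "y \<noteq> 0" and ya: "H *v y = complex_of_real a *s y"
      and yc: "K *v y = complex_of_real c *s y"
      using common_eigen[OF hH hK comm W invH invK xW] by blast
    define u where "u = complex_of_real (1 / norm y) *s y"
    have uW: "u \<in> W" using yW W unfolding csub_def u_def by blast
    have nu: "norm u = 1" using yW by (simp add: u_def norm_cscale_vec norm_divide)
    have uu: "cinner u u = 1" by (simp add: cinner_self nu)
    have uB: "u \<notin> B" using uW uu W_def by force
    have "P (insert u B)"
      unfolding P_def orthonormal_set_def
    proof (intro conjI ballI impI)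
      fix b assume "b \<in> insert u B"
      thus "cinner b b = 1" using uu onB unfolding orthonormal_set_def by auto
    next
      fix b b' assume b: "b \<in> insert u B" and b': "b' \<in> insert u B" and ne: "b \<noteq> b'"
      have ub: "cinner u b = 0" if "b \<in> B" for b
      proof -
        have "cinner b u = 0" using uW that by (simp add: W_def)
        thus ?thesis using cinner_cnj[of b u] by simp
      qed
      show "cinner b b' = 0"
        using b b' ne onB uW ub unfolding orthonormal_set_def W_def by auto
    next
      fix b assume "b \<in> insert u B"
      moreover have "H *v u = complex_of_real a *s u \<and> K *v u = complex_of_real c *s u"
        by (simp add: u_def mv_cscale_vec ya yc vec.scale_left_commute)
      ultimately show "\<exists>a c::real. H *v b = complex_of_real a *s b \<and> K *v b = complex_of_real c *s b"
        using PB unfolding P_def by blast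
    qed
    hence "card (insert u B) \<le> card B" using maxB by blast
    thus False using uB finB by simp
  qed
  have "(\<Sum>b\<in>B. outer b b) *v x = mat 1 *v x" for x
  proof -
    define r where "r = x - (\<Sum>b\<in>B. cinner b x *s b)"
    have "r \<in> W" unfolding W_def
    proof (intro CollectI ballI)
      fix b' assume b': "b' \<in> B"
      have "cinner b' r = cinner b' x - (\<Sum>b\<in>B. cinner b x * cinner b' b)"
        by (simp add: r_def cinner_diff_right cinner_sum_right cinner_scale_right)
      also have "\<dots> = 0" using orthonormal_sum_coeff[OF onB finB b'] by simp
      finally show "cinner b' r = 0" .
    qed
    hence "r = 0" by (rule W0)
    thus ?thesis by (simp add: r_def sum_mv outer_mv)
  qed
  hence "(\<Sum>b\<in>B. outer b b) = mat 1" by (simp add: matrix_eq)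
  thus ?thesis using onB finB PB unfolding P_def by blast
qed


lemma spectral_herm:
  fixes H :: "'n::finite cmat"
  assumes hH: "herm H"
  shows "\<exists>B. orthonormal_set B \<and> finite B \<and> (\<Sum>b\<in>B. outer b b) = mat 1 \<and>
     (\<forall>b\<in>B. \<exists>a::real. H *v b = complex_of_real a *s b)"
proof -
  have h0: "herm (0::'n cmat)" by (simp add: herm_def cadj_def vec_eq_iff)
  have "H ** 0 = 0 ** H" by (simp add: vec_eq_iff matrix_matrix_mult_def)
  from spectral_comm[OF hH h0 this] show ?thesis by blast
qed

lemma spectral_normal:
  fixes M :: "'n::finite cmat"
  assumes nM: "cadj M ** M = M ** cadj M"
  shows "\<exists>B. orthonormal_set B \<and> finite B \<and> (\<Sum>b\<in>B. outer b b) = mat 1 \<and>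
     (\<forall>b\<in>B. \<exists>\<mu>. M *v b = \<mu> *s b)"
proof -
  define H where "H = cscale (1/2) (M + cadj M)"
  define K where "K = cscale (-\<i>/2) (M - cadj M)"
  have hH: "herm H" unfolding herm_def H_def
    by (simp add: vec_eq_iff cadj_def cscale_def)
  have hK: "herm K" unfolding herm_def K_def
    by (simp add: vec_eq_iff cadj_def cscale_def algebra_simps)
  have Hv: "H *v x = (1/2) *s (M *v x + cadj M *v x)" for x
    by (simp add: H_def cscale_mv matrix_vector_mult_add_rdistrib)
  have Kv: "K *v x = (-\<i>/2) *s (M *v x - cadj M *v x)" for x
    by (simp add: K_def cscale_mv matrix_vector_mult_diff_rdistrib)
  have N: "M *v (cadj M *v x) = cadj M *v (M *v x)" for x
    by (simp add: matrix_vector_mul_assoc nM)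
  have "(H ** K) *v x = (K ** H) *v x" for x
  proof -
    have "(H ** K) *v x = H *v (K *v x)" by (simp add: matrix_vector_mul_assoc)
    also have "\<dots> = K *v (H *v x)"
      unfolding Hv Kv
      by (simp add: mv_cscale_vec matrix_vector_right_distrib matrix_vector_mult_diff_distrib N
          vec_eq_iff algebra_simps)
    also have "\<dots> = (K ** H) *v x" by (simp add: matrix_vector_mul_assoc)
    finally show ?thesis .
  qed
  hence comm: "H ** K = K ** H" by (simp add: matrix_eq)
  have MHK: "M *v x = H *v x + \<i> *s (K *v x)" for x
    unfolding Hv Kv by (simp add: vec_eq_iff algebra_simps)
  obtain B where B: "orthonormal_set B" "finite B" "(\<Sum>b\<in>B. outer b b) = mat 1"
    and eig: "\<forall>b\<in>B. \<exists>a c::real. H *v b = complex_of_real a *s b \<and> K *v b = complex_of_real c *s b"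
    using spectral_comm[OF hH hK comm] by blast
  have "\<forall>b\<in>B. \<exists>\<mu>. M *v b = \<mu> *s b"
  proof
    fix b assume "b \<in> B"
    then obtain a c :: real where "H *v b = complex_of_real a *s b" "K *v b = complex_of_real c *s b"
      using eig by blast
    hence "M *v b = (complex_of_real a + \<i> * complex_of_real c) *s b"
      by (simp add: MHK vec_eq_iff algebra_simps)
    thus "\<exists>\<mu>. M *v b = \<mu> *s b" by blast
  qed
  thus ?thesis using B by blast
qed

lemma mv_sum: "A *v (\<Sum>i\<in>I. f i) = (\<Sum>i\<in>I. A *v (f i :: complex^'n::finite))"
  by (induct I rule: infinite_finite_induct) (auto simp: matrix_vector_right_distrib)

lemma agree_on_basis:
  fixes F G :: "'n::finite cmat"
  assumes fin: "finite B" and B: "(\<Sum>b\<in>B. outer b b) = mat 1" and ag: "\<forall>b\<in>B. F *v b = G *v b"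
  shows "F = G"
proof -
  have "F *v x = G *v x" for x
  proof -
    have "F *v x = F *v (\<Sum>b\<in>B. cinner b x *s b)" using expand_basis[OF fin B, of x] by simp
    also have "\<dots> = (\<Sum>b\<in>B. cinner b x *s (F *v b))" by (simp add: mv_sum mv_cscale_vec)
    also have "\<dots> = (\<Sum>b\<in>B. cinner b x *s (G *v b))" using ag by simp
    also have "\<dots> = G *v (\<Sum>b\<in>B. cinner b x *s b)" by (simp add: mv_sum mv_cscale_vec)
    also have "\<dots> = G *v x" using expand_basis[OF fin B, of x] by simp
    finally show ?thesis .
  qed
  thus ?thesis by (simp add: matrix_eq)
qed

lemma cadj_sum: "cadj (\<Sum>i\<in>I. f i) = (\<Sum>i\<in>I. cadj (f i :: 'n::finite cmat))"
  by (induct I rule: infinite_finite_induct) (auto simp: cadj_add cadj_def vec_eq_iff)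

lemma cadj_cscale: "cadj (cscale c A) = cscale (cnj c) (cadj A)"
  by (simp add: vec_eq_iff cadj_def cscale_def)

lemma psd_sqrt:
  fixes P :: "'n::finite cmat"
  assumes hP: "herm P" and psd: "\<forall>x. 0 \<le> Re (cinner x (P *v x))"
  shows "\<exists>S. herm S \<and> S ** S = P \<and>
     (\<forall>x (\<mu>::real). P *v x = complex_of_real \<mu> *s x \<longrightarrow> S *v x = complex_of_real (sqrt \<mu>) *s x)"
proof -
  obtain B where on: "orthonormal_set B" and fin: "finite B" and sB: "(\<Sum>b\<in>B. outer b b) = mat 1"
    and eig: "\<forall>b\<in>B. \<exists>a::real. P *v b = complex_of_real a *s b"
    using spectral_herm[OF hP] by blast
  obtain \<nu> where \<nu>: "\<forall>b\<in>B. P *v b = complex_of_real (\<nu> b) *s b"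
    using eig by metis
  have bb: "cinner b b = 1" if "b \<in> B" for b using on that unfolding orthonormal_set_def by blast
  have \<nu>0: "\<nu> b \<ge> 0" if b: "b \<in> B" for b
  proof -
    have "Re (cinner b (P *v b)) = \<nu> b" using \<nu> b bb[OF b] by (simp add: cinner_scale_right)
    thus ?thesis using psd by metis
  qed
  define S where "S = (\<Sum>b\<in>B. cscale (complex_of_real (sqrt (\<nu> b))) (outer b b))"
  have Sv: "S *v x = (\<Sum>b\<in>B. (complex_of_real (sqrt (\<nu> b)) * cinner b x) *s b)" for x
    by (simp add: S_def sum_mv cscale_mv outer_mv vector_smult_assoc)
  have Pv: "P *v x = (\<Sum>b\<in>B. (complex_of_real (\<nu> b) * cinner b x) *s b)" for x
  proof -
    have "P *v x = P *v (\<Sum>b\<in>B. cinner b x *s b)" using expand_basis[OF fin sB, of x] by simp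
    also have "\<dots> = (\<Sum>b\<in>B. (complex_of_real (\<nu> b) * cinner b x) *s b)"
      using \<nu> by (simp add: mv_sum mv_cscale_vec vector_smult_assoc mult.commute)
    finally show ?thesis .
  qed
  have coef: "cinner b (P *v x) = complex_of_real (\<nu> b) * cinner b x" if b: "b \<in> B" for b x
  proof -
    have "cinner b (P *v x) = cinner (P *v b) x" using hP by (simp add: cinner_adj herm_def)
    thus ?thesis using \<nu> b by (simp add: cinner_scale_left)
  qed
  have eigS: "S *v x = complex_of_real (sqrt \<mu>) *s x" if Px: "P *v x = complex_of_real \<mu> *s x" for x \<mu>
  proof -
    have tm: "(complex_of_real (sqrt (\<nu> b)) * cinner b x) = complex_of_real (sqrt \<mu>) * cinner b x"
      if b: "b \<in> B" for b
    proof -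
      have "complex_of_real (\<nu> b) * cinner b x = complex_of_real \<mu> * cinner b x"
        using coef[OF b, of x] Px by (simp add: cinner_scale_right) blast
      thus ?thesis by (cases "cinner b x = 0") auto
    qed
    have "S *v x = (\<Sum>b\<in>B. (complex_of_real (sqrt \<mu>) * cinner b x) *s b)"
      unfolding Sv using tm by (intro sum.cong refl) simp
    also have "\<dots> = complex_of_real (sqrt \<mu>) *s (\<Sum>b\<in>B. cinner b x *s b)"
      by (simp add: vec.scale_sum_right vector_smult_assoc)
    also have "\<dots> = complex_of_real (sqrt \<mu>) *s x" using expand_basis[OF fin sB, of x] by simp
    finally show ?thesis .
  qed
  have SS: "S ** S = P"
  proof (rule agree_on_basis[OF fin sB], intro ballI)
    fix b assume b: "b \<in> B"
    have Sb: "S *v b = complex_of_real (sqrt (\<nu> b)) *s b" using eigS \<nu> b by blast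
    have "(S ** S) *v b = S *v (S *v b)" by (simp add: matrix_vector_mul_assoc)
    also have "\<dots> = P *v b"
    proof -
      have sq: "complex_of_real (sqrt (\<nu> b)) * complex_of_real (sqrt (\<nu> b)) = complex_of_real (\<nu> b)"
        using \<nu>0[OF b] by (metis abs_of_nonneg of_real_mult real_sqrt_mult_self)
      show ?thesis using \<nu> b by (simp add: Sb mv_cscale_vec vector_smult_assoc sq)
    qed
    finally show "(S ** S) *v b = P *v b" .
  qed
  have hS: "herm S" unfolding herm_def S_def
    by (simp add: cadj_sum cadj_cscale cadj_outer)
  show ?thesis using hS SS eigS by blast
qed

section \<open>Unitary dilation\<close>

lemma cadj_diff: "cadj (A - B) = cadj A - cadj B"
  by (simp add: vec_eq_iff cadj_def)

lemma contraction_adj: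
  fixes A :: "'n::finite cmat"
  assumes c: "\<forall>x. norm (A *v x) \<le> norm x"
  shows "norm (cadj A *v x) \<le> norm x"
proof -
  define y where "y = cadj A *v x"
  have "(norm y)\<^sup>2 = Re (cinner y y)" by (simp add: cinner_self_Re)
  also have "cinner y y = cinner x (A *v y)" by (simp add: y_def cinner_adj')
  also have "Re (cinner x (A *v y)) \<le> cmod (cinner x (A *v y))" by (rule complex_Re_le_cmod)
  also have "\<dots> \<le> norm x * norm (A *v y)" by (rule cauchy_schwarz_c)
  also have "\<dots> \<le> norm x * norm y" using c by (simp add: mult_left_mono)
  finally have le: "norm y * norm y \<le> norm x * norm y" by (simp add: power2_eq_square)
  show ?thesis
  proof (cases "norm y = 0")
    case True thus ?thesis by (simp add: y_def)
  next
    case False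
    hence "norm y > 0" by simp
    thus ?thesis using le y_def by (meson mult_right_le_imp_le)
  qed
qed

lemma psd_of_contraction:
  fixes A :: "'n::finite cmat"
  assumes c: "\<forall>x. norm (A *v x) \<le> norm x"
  shows "herm (mat 1 - cadj A ** A) \<and> (\<forall>x. 0 \<le> Re (cinner x ((mat 1 - cadj A ** A) *v x)))"
proof
  show "herm (mat 1 - cadj A ** A)" by (simp add: herm_def cadj_diff cadj_mult)
  show "\<forall>x. 0 \<le> Re (cinner x ((mat 1 - cadj A ** A) *v x))"
  proof
    fix x
    have "cinner x ((mat 1 - cadj A ** A) *v x) = cinner x x - cinner (A *v x) (A *v x)"
      by (simp add: matrix_vector_mult_diff_rdistrib matrix_vector_mul_assoc[symmetric]
          cinner_diff_right cinner_adj)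
    hence "Re (cinner x ((mat 1 - cadj A ** A) *v x)) = (norm x)\<^sup>2 - (norm (A *v x))\<^sup>2"
      by (simp add: cinner_self_Re)
    moreover have "(norm (A *v x))\<^sup>2 \<le> (norm x)\<^sup>2" using c by (simp add: power_mono)
    ultimately show "0 \<le> Re (cinner x ((mat 1 - cadj A ** A) *v x))" by simp
  qed
qed

lemma sum_UNIV_Plus: "(\<Sum>k\<in>UNIV. f k) = (\<Sum>a\<in>UNIV. f (Inl a)) + (\<Sum>a\<in>UNIV. f (Inr a))"
  for f :: "('a::finite + 'b::finite) \<Rightarrow> complex"
  using sum.Plus[of "UNIV::'a set" "UNIV::'b set" f] by (simp add: o_def)

lemma mult_zero_right_m: "(M::'n::finite cmat) ** 0 = 0"
  by (simp add: vec_eq_iff matrix_matrix_mult_def)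

lemma mult_sum_right: "(M::'n::finite cmat) ** (\<Sum>i\<in>I. f i) = (\<Sum>i\<in>I. M ** f i)"
  by (induct I rule: infinite_finite_induct) (auto simp: matrix_add_ldistrib mult_zero_right_m)

lemma adj_mult_entry: "(cadj X ** Y) $ a $ b = (\<Sum>c\<in>UNIV. cnj (X$c$a) * Y$c$b)"
  by (simp add: matrix_matrix_mult_def cadj_def)

lemma mult_adj_entry: "(X ** cadj Y) $ a $ b = (\<Sum>c\<in>UNIV. X$a$c * cnj (Y$b$c))"
  by (simp add: matrix_matrix_mult_def cadj_def)

lemma dilation:
  fixes A :: "'n::finite cmat"
  assumes c: "\<forall>x. norm (A *v x) \<le> norm x"
  shows "\<exists>(Z :: (complex^('n+'n)) set) \<mu> w. finite Z \<and> (\<forall>z\<in>Z. cmod (\<mu> z) \<le> 1) \<and>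
           (\<Sum>z\<in>Z. outer (w z) (w z)) = mat 1 \<and> (\<Sum>z\<in>Z. cscale (\<mu> z) (outer (w z) (w z))) = A"
proof -
  have c': "\<forall>x. norm (cadj A *v x) \<le> norm x" using contraction_adj[OF c] by blast
  obtain S1 where hS1: "herm S1" and S1S1: "S1 ** S1 = mat 1 - cadj A ** A"
    and eig1: "\<forall>x (\<mu>::real). (mat 1 - cadj A ** A) *v x = complex_of_real \<mu> *s x \<longrightarrow>
                  S1 *v x = complex_of_real (sqrt \<mu>) *s x"
    using psd_sqrt psd_of_contraction[OF c] by blast
  obtain S2 where hS2: "herm S2" and S2S2: "S2 ** S2 = mat 1 - A ** cadj A"
    and eig2: "\<forall>x (\<mu>::real). (mat 1 - A ** cadj A) *v x = complex_of_real \<mu> *s x \<longrightarrow>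
                  S2 *v x = complex_of_real (sqrt \<mu>) *s x"
    using psd_sqrt psd_of_contraction[OF c'] by (metis cadj_cadj)
  have hP1: "herm (mat 1 - cadj A ** A)" using psd_of_contraction[OF c] by blast
  obtain B where finB: "finite B" and sB: "(\<Sum>b\<in>B. outer b b) = mat 1"
    and eigB: "\<forall>b\<in>B. \<exists>a::real. (mat 1 - cadj A ** A) *v b = complex_of_real a *s b"
    using spectral_herm[OF hP1] by blast
  have inter: "S2 ** A = A ** S1"
  proof (rule agree_on_basis[OF finB sB], intro ballI)
    fix b assume b: "b \<in> B"
    then obtain a :: real where a: "(mat 1 - cadj A ** A) *v b = complex_of_real a *s b" using eigB by blast
    have "(mat 1 - A ** cadj A) *v (A *v b) = A *v ((mat 1 - cadj A ** A) *v b)"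
      by (simp add: matrix_vector_mult_diff_rdistrib matrix_vector_mul_assoc[symmetric]
          matrix_vector_mult_diff_distrib)
    also have "\<dots> = complex_of_real a *s (A *v b)" by (simp add: a mv_cscale_vec)
    finally have "S2 *v (A *v b) = complex_of_real (sqrt a) *s (A *v b)" using eig2 by blast
    moreover have "S1 *v b = complex_of_real (sqrt a) *s b" using eig1 a by blast
    ultimately show "(S2 ** A) *v b = (A ** S1) *v b"
      by (simp add: matrix_vector_mul_assoc[symmetric] mv_cscale_vec)
  qed
  have I1: "cadj A ** A + cadj S1 ** S1 = mat 1"
    using hS1 S1S1 unfolding herm_def by simp
  have I2: "cadj A ** S2 = cadj S1 ** cadj A"
    using arg_cong[OF inter, of cadj] hS1 hS2 unfolding herm_def by (simp add: cadj_mult)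
  have I3: "cadj S2 ** A = A ** S1" using inter hS2 unfolding herm_def by simp
  have I4: "cadj S2 ** S2 + A ** cadj A = mat 1"
    using hS2 S2S2 unfolding herm_def by simp
  have E1: "(\<Sum>c\<in>UNIV. cnj (A$c$a) * A$c$b) + (\<Sum>c\<in>UNIV. cnj (S1$c$a) * S1$c$b) = (if a = b then 1 else 0)" for a b
    using arg_cong[OF I1, of "\<lambda>M. M$a$b"] by (simp add: adj_mult_entry mat_def)
  have E2: "(\<Sum>c\<in>UNIV. cnj (A$c$a) * S2$c$b) = (\<Sum>c\<in>UNIV. cnj (S1$c$a) * cnj (A$b$c))" for a b
    using arg_cong[OF I2, of "\<lambda>M. M$a$b"] by (simp only: adj_mult_entry) (simp add: cadj_def)
  have E3: "(\<Sum>c\<in>UNIV. cnj (S2$c$a) * A$c$b) = (\<Sum>c\<in>UNIV. A$a$c * S1$c$b)" for a b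
    using arg_cong[OF I3, of "\<lambda>M. M$a$b"] by (simp only: adj_mult_entry) (simp add: matrix_matrix_mult_def)
  have E4: "(\<Sum>c\<in>UNIV. cnj (S2$c$a) * S2$c$b) + (\<Sum>c\<in>UNIV. A$a$c * cnj (A$b$c)) = (if a = b then 1 else 0)" for a b
    using arg_cong[OF I4, of "\<lambda>M. M$a$b"] by (simp add: adj_mult_entry mult_adj_entry mat_def)
  define U :: "complex^('n+'n)^('n+'n)" where
    "U = (\<chi> i j. case i of Inl a \<Rightarrow> (case j of Inl b \<Rightarrow> A$a$b | Inr b \<Rightarrow> S2$a$b)
                          | Inr a \<Rightarrow> (case j of Inl b \<Rightarrow> S1$a$b | Inr b \<Rightarrow> - (cadj A)$a$b))"
  have UU: "cadj U ** U = mat 1"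
  proof -
    have "(cadj U ** U) $ i $ j = mat 1 $ i $ j" for i j
    proof (cases i; cases j)
      fix a b assume "i = Inl a" "j = Inl b"
      thus ?thesis using E1[of a b] by (simp only: adj_mult_entry) (simp add: sum_UNIV_Plus U_def mat_def)
    next
      fix a b assume "i = Inl a" "j = Inr b"
      thus ?thesis using E2[of a b] by (simp only: adj_mult_entry) (simp add: sum_UNIV_Plus U_def mat_def cadj_def sum_negf)
    next
      fix a b assume "i = Inr a" "j = Inl b"
      thus ?thesis using E3[of a b] by (simp only: adj_mult_entry) (simp add: sum_UNIV_Plus U_def mat_def cadj_def sum_negf)
    next
      fix a b assume "i = Inr a" "j = Inr b"
      thus ?thesis using E4[of a b] by (simp only: adj_mult_entry) (simp add: sum_UNIV_Plus U_def mat_def cadj_def)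
    qed
    thus ?thesis by (simp add: vec_eq_iff)
  qed
  hence UU': "U ** cadj U = mat 1" using matrix_left_right_inverse by blast
  obtain Z where onZ: "orthonormal_set Z" and finZ: "finite Z" and sZ: "(\<Sum>z\<in>Z. outer z z) = mat 1"
    and eigZ: "\<forall>z\<in>Z. \<exists>\<mu>. U *v z = \<mu> *s z"
    using spectral_normal[of U] UU UU' by auto
  obtain \<mu> where \<mu>: "\<forall>z\<in>Z. U *v z = \<mu> z *s z" using eigZ by metis
  have \<mu>1: "cmod (\<mu> z) \<le> 1" if z: "z \<in> Z" for z
  proof -
    have zz: "cinner z z = 1" using onZ z unfolding orthonormal_set_def by blast
    have "cinner (U *v z) (U *v z) = cinner z ((cadj U ** U) *v z)"
      by (simp add: cinner_adj' matrix_vector_mul_assoc)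
    also have "\<dots> = 1" using UU zz by simp
    finally have "cnj (\<mu> z) * \<mu> z = 1" using \<mu> z zz by (simp add: cinner_scale_left cinner_scale_right mult.commute)
    hence "complex_of_real ((cmod (\<mu> z))\<^sup>2) = 1" by (metis complex_norm_square mult.commute)
    hence "(cmod (\<mu> z))\<^sup>2 = 1" using of_real_eq_1_iff by blast
    thus ?thesis by (auto simp: power2_eq_1_iff)
  qed
  have Urep: "U = (\<Sum>z\<in>Z. cscale (\<mu> z) (outer z z))"
  proof -
    have "U = U ** (\<Sum>z\<in>Z. outer z z)" using sZ by simp
    also have "\<dots> = (\<Sum>z\<in>Z. cscale (\<mu> z) (outer z z))"
      unfolding mult_sum_right using \<mu> by (intro sum.cong refl) (simp add: mult_outer cscale_outer)
    finally show ?thesis .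
  qed
  define w :: "complex^('n+'n) \<Rightarrow> complex^'n" where "w z = (\<chi> a. z $ Inl a)" for z
  have rep1: "(\<Sum>z\<in>Z. outer (w z) (w z)) = mat 1"
  proof -
    have "(\<Sum>z\<in>Z. outer (w z) (w z)) $ a $ b = mat 1 $ a $ b" for a b
    proof -
      have "(\<Sum>z\<in>Z. outer (w z) (w z)) $ a $ b = (\<Sum>z\<in>Z. outer z z) $ Inl a $ Inl b"
        by (simp add: sum_component outer_def w_def)
      also have "\<dots> = mat 1 $ a $ b" using sZ by (simp add: mat_def)
      finally show ?thesis .
    qed
    thus ?thesis by (simp add: vec_eq_iff)
  qed
  have rep2: "(\<Sum>z\<in>Z. cscale (\<mu> z) (outer (w z) (w z))) = A"
  proof -
    have "(\<Sum>z\<in>Z. cscale (\<mu> z) (outer (w z) (w z))) $ a $ b = A $ a $ b" for a b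
    proof -
      have "(\<Sum>z\<in>Z. cscale (\<mu> z) (outer (w z) (w z))) $ a $ b
           = (\<Sum>z\<in>Z. cscale (\<mu> z) (outer z z)) $ Inl a $ Inl b"
        by (simp add: sum_component outer_def w_def cscale_def)
      also have "\<dots> = U $ Inl a $ Inl b" using Urep by simp
      also have "\<dots> = A $ a $ b" by (simp add: U_def)
      finally show ?thesis .
    qed
    thus ?thesis by (simp add: vec_eq_iff)
  qed
  show ?thesis using finZ \<mu>1 rep1 rep2 by blast
qed




section \<open>Numerical radius facts\<close>

lemma norm_axis_c: "norm (axis m (1::complex) :: complex^'n::finite) = 1"
proof -
  have "(norm (axis m (1::complex) :: complex^'n))\<^sup>2 = (\<Sum>i\<in>UNIV. if i = m then 1 else 0)"
    unfolding norm_sq_sum by (intro sum.cong refl) (simp add: axis_def)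
  hence "(norm (axis m (1::complex) :: complex^'n))\<^sup>2 = 1" by simp
  thus ?thesis by (simp add: power2_eq_1_iff)
qed

lemma comp_le_norm: "cmod (x$i) \<le> norm (x::complex^'n::finite)"
proof -
  have "(cmod (x$i))\<^sup>2 \<le> (norm x)\<^sup>2" unfolding norm_sq_sum by (rule member_le_sum) auto
  thus ?thesis by (rule power2_le_imp_le) simp
qed

lemma exists_unit: "\<exists>x::complex^'n::finite. norm x = 1"
  using norm_axis_c by blast

lemma quad_bound:
  fixes X :: "'n::finite cmat"
  shows "cmod (cinner x (X *v x)) \<le> (\<Sum>i\<in>UNIV. \<Sum>j\<in>UNIV. cmod (X$i$j)) * (norm x * norm x)"
proof -
  have eq: "cinner x (X *v x) = (\<Sum>i\<in>UNIV. \<Sum>j\<in>UNIV. cnj (x$i) * (X$i$j * x$j))"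
    by (simp add: cinner_def matrix_vector_mult_def sum_distrib_left)
  have "cmod (cinner x (X *v x)) \<le> (\<Sum>i\<in>UNIV. \<Sum>j\<in>UNIV. cmod (cnj (x$i) * (X$i$j * x$j)))"
    unfolding eq by (intro order_trans[OF norm_sum] sum_mono norm_sum)
  also have "\<dots> \<le> (\<Sum>i\<in>UNIV. \<Sum>j\<in>UNIV. cmod (X$i$j) * (norm x * norm x))"
  proof (intro sum_mono)
    fix i j
    have "cmod (cnj (x$i) * (X$i$j * x$j)) = cmod (X$i$j) * (cmod (x$i) * cmod (x$j))"
      by (simp add: norm_mult)
    also have "\<dots> \<le> cmod (X$i$j) * (norm x * norm x)"
    proof -
      have "cmod (x$i) * cmod (x$j) \<le> norm x * norm x"
      proof -
        have a: "cmod (x$i) \<le> norm x" by (rule comp_le_norm)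
        have b: "cmod (x$j) \<le> norm x" by (rule comp_le_norm)
        show ?thesis by (rule mult_mono[OF a b norm_ge_zero norm_ge_zero])
      qed
      thus ?thesis by (rule mult_left_mono) simp
    qed
    finally show "cmod (cnj (x$i) * (X$i$j * x$j)) \<le> cmod (X$i$j) * (norm x * norm x)" .
  qed
  also have "\<dots> = (\<Sum>i\<in>UNIV. \<Sum>j\<in>UNIV. cmod (X$i$j)) * (norm x * norm x)"
    by (simp add: sum_distrib_right)
  finally show ?thesis .
qed

lemma nr_bdd: "bdd_above ((\<lambda>x. cmod (cinner x (X *v x))) ` {x. norm x = 1})"
proof (rule bdd_aboveI2)
  fix x :: "complex^'a" assume "x \<in> {x. norm x = 1}"
  thus "cmod (cinner x (X *v x)) \<le> (\<Sum>i\<in>UNIV. \<Sum>j\<in>UNIV. cmod (X$i$j))"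
    using quad_bound[of x X] by simp
qed

lemma nr_upper: "norm x = 1 \<Longrightarrow> cmod (cinner x (X *v x)) \<le> num_radius X"
  unfolding num_radius_def by (rule cSUP_upper[OF _ nr_bdd]) simp

lemma nr_least: "(\<And>x. norm x = 1 \<Longrightarrow> cmod (cinner x (X *v x)) \<le> c) \<Longrightarrow> num_radius X \<le> c"
  unfolding num_radius_def using exists_unit by (intro cSUP_least) auto

lemma nr_nonneg: "0 \<le> num_radius (X::'n::finite cmat)"
  using exists_unit nr_upper by (metis norm_ge_zero order_trans)

lemma nr_scaled: "cmod (cinner v (X *v v)) \<le> num_radius X * (norm v)\<^sup>2"
proof (cases "v = 0")
  case True thus ?thesis by simp
next
  case False
  define u where "u = complex_of_real (1 / norm v) *s v"
  have nu: "norm u = 1" using False by (simp add: u_def norm_cscale_vec norm_divide)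
  have "cinner u (X *v u) = complex_of_real ((1 / norm v)\<^sup>2) * cinner v (X *v v)"
    by (simp add: u_def mv_cscale_vec cinner_scale_left cinner_scale_right power2_eq_square)
  hence "cmod (cinner u (X *v u)) = (1 / norm v)\<^sup>2 * cmod (cinner v (X *v v))"
    by (simp add: norm_mult norm_power norm_divide)
  hence "(1 / norm v)\<^sup>2 * cmod (cinner v (X *v v)) \<le> num_radius X" using nr_upper[OF nu, of X] by simp
  thus ?thesis using False by (simp add: field_simps power2_eq_square)
qed

lemma cinner_axis: "cinner (axis k 1) v = v $ k"
proof -
  have "cinner (axis k 1) v = (\<Sum>i\<in>UNIV. if i = k then v$i else 0)"
    unfolding cinner_def by (intro sum.cong refl) (simp add: axis_def)
  thus ?thesis by simp
qed

lemma mv_axis: "(X *v axis l 1) $ k = X $ k $ l"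
proof -
  have "(X *v axis l 1) $ k = (\<Sum>j\<in>UNIV. if j = l then X$k$j else 0)"
    unfolding matrix_vector_mult_def vec_lambda_beta by (intro sum.cong refl) (simp add: axis_def)
  thus ?thesis by simp
qed

lemma quad_expand:
  "cinner (x + c *s y) (X *v (x + c *s y)) =
     cinner x (X *v x) + c * cinner x (X *v y) + cnj c * cinner y (X *v x) + cnj c * c * cinner y (X *v y)"
  by (simp add: matrix_vector_right_distrib mv_cscale_vec cinner_add_left cinner_add_right
      cinner_scale_left cinner_scale_right distrib_left mult.assoc)

lemma four_triangle: "cmod (a - b - \<i>*c + \<i>*d) \<le> cmod a + cmod b + cmod c + cmod d"
proof -
  have 1: "cmod (a - b - \<i>*c + \<i>*d) \<le> cmod (a - b - \<i>*c) + cmod (\<i>*d)" by (rule norm_triangle_ineq)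
  have 2: "cmod (a - b - \<i>*c) \<le> cmod (a - b) + cmod (\<i>*c)" by (rule norm_triangle_ineq4)
  have 3: "cmod (a - b) \<le> cmod a + cmod b" by (rule norm_triangle_ineq4)
  show ?thesis using 1 2 3 by (simp add: norm_mult)
qed

lemma polar_entry: "cmod (X $ k $ l) \<le> 4 * num_radius (X::'n::finite cmat)"
proof -
  define x :: "complex^'n" where "x = axis k 1"
  define y :: "complex^'n" where "y = axis l 1"
  define q where "q c = cinner (x + c *s y) (X *v (x + c *s y))" for c
  define p where "p = cinner x (X *v y)"
  define a where "a = cinner x (X *v x)"
  define r where "r = cinner y (X *v x)"
  define b where "b = cinner y (X *v y)"
  have q1: "q 1 = a + p + r + b" unfolding q_def quad_expand a_def b_def r_def p_def by simp
  have q2: "q (-1) = a - p - r + b" unfolding q_def quad_expand a_def b_def r_def p_def by simp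
  have q3: "q \<i> = a + \<i>*p - \<i>*r + b" unfolding q_def quad_expand a_def b_def r_def p_def by simp
  have q4: "q (-\<i>) = a - \<i>*p + \<i>*r + b" unfolding q_def quad_expand a_def b_def r_def p_def by simp
  have num: "4*p = (a + p + r + b) - (a - p - r + b) - \<i>*(a + \<i>*p - \<i>*r + b) + \<i>*(a - \<i>*p + \<i>*r + b)"
    by (simp add: algebra_simps)
  have id: "4 * p = q 1 - q (-1) - \<i> * q \<i> + \<i> * q (-\<i>)"
    unfolding q1 q2 q3 q4 by (rule num)
  have nx: "norm x = 1" "norm y = 1" by (simp_all add: x_def y_def norm_axis_c)
  have qb: "cmod (q c) \<le> num_radius X * 4" if "cmod c = 1" for c
  proof -
    have nv: "norm (x + c *s y) \<le> 2"
      using norm_triangle_ineq[of x "c *s y"] nx that by (simp add: norm_cscale_vec)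
    have "cmod (q c) \<le> num_radius X * (norm (x + c *s y))\<^sup>2" unfolding q_def by (rule nr_scaled)
    also have "\<dots> \<le> num_radius X * 4"
    proof (rule mult_left_mono[OF _ nr_nonneg])
      have "(norm (x + c *s y))\<^sup>2 \<le> 2\<^sup>2" using nv by (intro power_mono) auto
      thus "(norm (x + c *s y))\<^sup>2 \<le> 4" by simp
    qed
    finally show ?thesis .
  qed
  have "cmod (4 * p) \<le> cmod (q 1) + cmod (q (-1)) + cmod (q \<i>) + cmod (q (-\<i>))"
    unfolding id by (rule four_triangle)
  also have "\<dots> \<le> num_radius X * 4 + num_radius X * 4 + num_radius X * 4 + num_radius X * 4"
    using qb[of 1] qb[of "-1"] qb[of "\<i>"] qb[of "-\<i>"] by (intro add_mono) auto
  finally have "4 * cmod p \<le> 16 * num_radius X" by (simp add: norm_mult)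
  moreover have "p = X $ k $ l" by (simp add: p_def x_def y_def cinner_axis mv_axis)
  ultimately show ?thesis by simp
qed

lemma trace_bound:
  assumes "num_radius X \<le> 1"
  shows "cmod (mtrace (cadj A ** X)) \<le> (\<Sum>i\<in>UNIV. \<Sum>c\<in>UNIV. cmod (A$c$i) * 4)"
proof -
  have "cmod (mtrace (cadj A ** X)) = cmod (\<Sum>i\<in>UNIV. \<Sum>c\<in>UNIV. cnj (A$c$i) * X$c$i)"
    by (simp add: mtrace_def adj_mult_entry)
  also have "\<dots> \<le> (\<Sum>i\<in>UNIV. \<Sum>c\<in>UNIV. cmod (cnj (A$c$i) * X$c$i))"
    by (intro order_trans[OF norm_sum] sum_mono norm_sum)
  also have "\<dots> \<le> (\<Sum>i\<in>UNIV. \<Sum>c\<in>UNIV. cmod (A$c$i) * 4)"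
  proof (intro sum_mono)
    fix i c
    have "cmod (X$c$i) \<le> 4" using polar_entry[of X c i] assms by linarith
    thus "cmod (cnj (A$c$i) * X$c$i) \<le> cmod (A$c$i) * 4" by (simp add: norm_mult mult_left_mono)
  qed
  finally show ?thesis .
qed

lemma dual_bdd:
  fixes A :: "'n::finite cmat"
  shows "bdd_above ((\<lambda>X. cmod (mtrace (cadj A ** X))) ` {X. num_radius X \<le> 1})"
proof (rule bdd_aboveI2)
  fix X :: "'n cmat" assume "X \<in> {X. num_radius X \<le> 1}"
  thus "cmod (mtrace (cadj A ** X)) \<le> (\<Sum>i\<in>UNIV. \<Sum>c\<in>UNIV. cmod (A$c$i) * 4)"
    by (intro trace_bound) simp
qed

lemma nr_zero: "num_radius (0::'n::finite cmat) = 0"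
  by (rule antisym[OF nr_least nr_nonneg]) simp

lemma dual_upper:
  fixes A :: "'n::finite cmat"
  assumes "num_radius X \<le> 1" shows "cmod (mtrace (cadj A ** X)) \<le> num_radius_dual A"
proof -
  have "X \<in> {X. num_radius X \<le> 1}" using assms by simp
  from cSUP_upper[OF this dual_bdd[of A]] show ?thesis unfolding num_radius_dual_def .
qed

lemma dual_least:
  fixes A :: "'n::finite cmat"
  assumes "\<And>X. num_radius X \<le> 1 \<Longrightarrow> cmod (mtrace (cadj A ** X)) \<le> c"
  shows "num_radius_dual A \<le> c"
proof -
  have "(0::'n cmat) \<in> {X. num_radius X \<le> 1}" by (simp add: nr_zero)
  hence ne: "{X::'n cmat. num_radius X \<le> 1} \<noteq> {}" by (intro notI) simp
  have "(SUP X\<in>{X. num_radius X \<le> 1}. cmod (mtrace (cadj A ** X))) \<le> c"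
    by (rule cSUP_least[OF ne]) (simp add: assms)
  thus ?thesis unfolding num_radius_dual_def .
qed

lemma dual_nonneg: "0 \<le> num_radius_dual (A::'n::finite cmat)"
proof -
  have "num_radius (0::'n cmat) \<le> 1" by (simp add: nr_zero)
  from dual_upper[OF this, of A] show ?thesis by (simp add: mult_zero_right_m mtrace_def)
qed

lemma mtrace_outer: "mtrace (outer u v) = cinner v u"
  by (simp add: mtrace_def outer_def cinner_def mult.commute)

lemma outer_mult: "outer u v ** C = outer u (cadj C *v v)"
  by (simp add: vec_eq_iff matrix_matrix_mult_def matrix_vector_mult_def outer_def cadj_def
      sum_distrib_left)
     (intro allI sum.cong refl, simp add: mult.commute)

lemma trace_adj_outer: "mtrace (cadj (outer u v) ** X) = cinner u (X *v v)"
  by (simp add: cadj_outer outer_mult mtrace_outer cinner_adj')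









section \<open>Operator norm\<close>

lemma zero_mv: "(0::'n::finite cmat) *v x = 0"
  by (simp add: vec_eq_iff matrix_vector_mult_def)

lemma mv_zero: "(A::'n::finite cmat) *v 0 = 0"
  by (simp add: vec_eq_iff matrix_vector_mult_def)

lemma opn_bound: "norm (A *v x) \<le> op_norm A * norm (x::complex^'n::finite)"
  unfolding op_norm_def by (rule onorm[OF matrix_vector_mul_bounded_linear])

lemma opn_le:
  fixes A :: "'n::finite cmat"
  assumes "0 \<le> b" "\<And>x. norm (A *v x) \<le> b * norm x"
  shows "op_norm A \<le> b"
  unfolding op_norm_def by (rule onorm_bound) (use assms in auto)

lemma opn_nonneg: "0 \<le> op_norm (A::'n::finite cmat)"
  unfolding op_norm_def by (rule onorm_pos_le[OF matrix_vector_mul_bounded_linear])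

lemma opn_scale_le: "op_norm (cscale c A) \<le> cmod c * op_norm (A::'n::finite cmat)"
proof (rule opn_le)
  show "0 \<le> cmod c * op_norm A" using opn_nonneg[of A] by simp
  fix x :: "complex^'n"
  have "norm (cscale c A *v x) = cmod c * norm (A *v x)" by (simp add: cscale_mv norm_cscale_vec)
  also have "\<dots> \<le> cmod c * (op_norm A * norm x)" by (rule mult_left_mono[OF opn_bound]) simp
  finally show "norm (cscale c A *v x) \<le> cmod c * op_norm A * norm x" by (simp add: mult.assoc)
qed

lemma cscale_cscale: "cscale a (cscale b A) = cscale (a*b) A"
  by (simp add: vec_eq_iff cscale_def mult.assoc)

lemma cscale_one: "cscale 1 A = A"
  by (simp add: vec_eq_iff cscale_def)

lemma cscale_zero: "cscale 0 A = 0"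
  by (simp add: vec_eq_iff cscale_def)

lemma opn_zero_iff: "op_norm A = 0 \<longleftrightarrow> A = (0::'n::finite cmat)"
  unfolding op_norm_def onorm_eq_0[OF matrix_vector_mul_bounded_linear]
proof
  assume "\<forall>x. A *v x = 0"
  hence "\<forall>x. A *v x = 0 *v x" by (simp add: zero_mv)
  thus "A = 0" by (simp add: matrix_eq)
next
  assume "A = 0" thus "\<forall>x. A *v x = 0" by (simp add: zero_mv)
qed

lemma opn_scale: "op_norm (cscale c A) = cmod c * op_norm (A::'n::finite cmat)"
proof (cases "c = 0")
  case True
  have "op_norm (0::'n cmat) = 0" by (simp add: opn_zero_iff)
  thus ?thesis using True by (simp add: cscale_zero)
next
  case False
  hence pos: "cmod c > 0" by simp
  have "op_norm A = op_norm (cscale (1/c) (cscale c A))" using False by (simp add: cscale_cscale cscale_one)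
  also have "\<dots> \<le> cmod (1/c) * op_norm (cscale c A)" by (rule opn_scale_le)
  finally have "op_norm A \<le> op_norm (cscale c A) / cmod c" by (simp add: norm_divide)
  hence "op_norm A * cmod c \<le> op_norm (cscale c A)" using pos by (simp add: pos_le_divide_eq)
  thus ?thesis using opn_scale_le[of c A] by (simp add: mult.commute)
qed

lemma opn_triangle: "op_norm (A + B) \<le> op_norm A + op_norm (B::'n::finite cmat)"
proof -
  have "(*v) (A + B) = (\<lambda>x. A *v x + B *v x)" by (rule ext) (simp add: matrix_vector_mult_add_rdistrib)
  thus ?thesis unfolding op_norm_def
    using onorm_triangle[OF matrix_vector_mul_bounded_linear matrix_vector_mul_bounded_linear, of A B]
    by simp
qed

lemma sum_ab_le:
  fixes a b :: "nat \<Rightarrow> real"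
  shows "(\<Sum>i<k. a i * b i) \<le> sqrt (\<Sum>i<k. (a i)\<^sup>2) * sqrt (\<Sum>i<k. (b i)\<^sup>2)"
proof -
  have "(\<Sum>i<k. a i * b i)\<^sup>2 \<le> (\<Sum>i<k. (a i)\<^sup>2) * (\<Sum>i<k. (b i)\<^sup>2)" by (rule Cauchy_Schwarz_ineq_sum)
  hence "(\<Sum>i<k. a i * b i) \<le> sqrt ((\<Sum>i<k. (a i)\<^sup>2) * (\<Sum>i<k. (b i)\<^sup>2))" by (rule real_le_rsqrt)
  thus ?thesis by (simp add: real_sqrt_mult)
qed

lemma opn_M:
  fixes C X :: "nat \<Rightarrow> 'n::finite cmat"
  assumes sumI: "(\<Sum>i<k. cadj (C i) ** C i) = mat 1"
  shows "op_norm (\<Sum>i<k. cadj (C i) ** X i ** C i) \<le> Max ((\<lambda>i. op_norm (X i)) ` {..<k})"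
proof -
  have k0: "k \<noteq> 0"
  proof
    assume "k = 0"
    hence "(mat 1::'n cmat) = 0" using sumI by simp
    thus False using mat1_neq0 by blast
  qed
  define m where "m = Max ((\<lambda>i. op_norm (X i)) ` {..<k})"
  have mi: "op_norm (X i) \<le> m" if "i < k" for i unfolding m_def using that by (intro Max_ge) auto
  have m0: "0 \<le> m" using mi[of 0] k0 opn_nonneg[of "X 0"] by simp
  have ssq: "(\<Sum>i<k. (norm (C i *v v))\<^sup>2) = (norm v)\<^sup>2" for v
  proof -
    have "(\<Sum>i<k. (norm (C i *v v))\<^sup>2) = Re (\<Sum>i<k. cinner (C i *v v) (C i *v v))"
      by (simp add: cinner_self)
    also have "(\<Sum>i<k. cinner (C i *v v) (C i *v v)) = cinner v ((\<Sum>i<k. cadj (C i) ** C i) *v v)"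
      by (simp add: sum_mv cinner_sum_right cinner_adj' matrix_vector_mul_assoc[symmetric])
    also have "\<dots> = cinner v v" using sumI by simp
    finally show ?thesis by (simp add: cinner_self)
  qed
  define M where "M = (\<Sum>i<k. cadj (C i) ** X i ** C i)"
  have main: "norm (M *v x) \<le> m * norm x" for x
  proof -
    define y where "y = M *v x"
    define a where "a i = norm (C i *v y)" for i
    define b where "b i = norm (C i *v x)" for i
    have t: "cinner y ((cadj (C i) ** X i ** C i) *v x) = cinner (C i *v y) (X i *v (C i *v x))" for i
    proof -
      have "(cadj (C i) ** X i ** C i) *v x = cadj (C i) *v (X i *v (C i *v x))"
        by (simp add: matrix_vector_mul_assoc[symmetric])
      thus ?thesis using cinner_adj[of y "cadj (C i)" "X i *v (C i *v x)"] by simp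
    qed
    have e: "cinner y y = (\<Sum>i<k. cinner (C i *v y) (X i *v (C i *v x)))"
    proof -
      have "cinner y y = cinner y (M *v x)" by (simp add: y_def)
      also have "\<dots> = (\<Sum>i<k. cinner y ((cadj (C i) ** X i ** C i) *v x))"
        unfolding M_def by (simp add: sum_mv cinner_sum_right)
      also have "\<dots> = (\<Sum>i<k. cinner (C i *v y) (X i *v (C i *v x)))" using t by simp
      finally show ?thesis .
    qed
    have tb: "Re (cinner (C i *v y) (X i *v (C i *v x))) \<le> a i * (m * b i)" if "i < k" for i
    proof -
      have "Re (cinner (C i *v y) (X i *v (C i *v x))) \<le> cmod (cinner (C i *v y) (X i *v (C i *v x)))"
        by (rule complex_Re_le_cmod)
      also have "\<dots> \<le> a i * norm (X i *v (C i *v x))" unfolding a_def by (rule cauchy_schwarz_c)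
      also have "\<dots> \<le> a i * (m * b i)"
      proof (rule mult_left_mono)
        have "norm (X i *v (C i *v x)) \<le> op_norm (X i) * b i" unfolding b_def by (rule opn_bound)
        also have "\<dots> \<le> m * b i" using mi[OF that] by (rule mult_right_mono) (simp add: b_def)
        finally show "norm (X i *v (C i *v x)) \<le> m * b i" .
      qed (simp add: a_def)
      finally show ?thesis .
    qed
    have "(norm y)\<^sup>2 = Re (cinner y y)" by (simp add: cinner_self)
    also have "\<dots> = (\<Sum>i<k. Re (cinner (C i *v y) (X i *v (C i *v x))))" by (simp add: e)
    also have "\<dots> \<le> (\<Sum>i<k. a i * (m * b i))" using tb by (intro sum_mono) simp
    also have "\<dots> = m * (\<Sum>i<k. a i * b i)" by (simp add: sum_distrib_left mult.left_commute)
    also have "\<dots> \<le> m * (sqrt (\<Sum>i<k. (a i)\<^sup>2) * sqrt (\<Sum>i<k. (b i)\<^sup>2))"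
      by (rule mult_left_mono[OF sum_ab_le m0])
    also have "\<dots> = m * (norm y * norm x)" by (simp add: a_def b_def ssq)
    finally have le: "norm y * norm y \<le> (m * norm x) * norm y" by (simp add: power2_eq_square mult_ac)
    show ?thesis
    proof (cases "norm y = 0")
      case True thus ?thesis using m0 by (simp add: y_def)
    next
      case False
      hence "norm y > 0" by simp
      with le have "norm y \<le> m * norm x" by (rule mult_right_le_imp_le)
      thus ?thesis by (simp add: y_def)
    qed
  qed
  have "op_norm M \<le> m" by (rule opn_le[OF m0 main])
  thus ?thesis by (simp add: M_def m_def)
qed

lemma opn_is_M: "is_M_norm (op_norm :: 'n::finite cmat \<Rightarrow> real)"
  unfolding is_M_norm_def is_matrix_norm_def
  using opn_nonneg opn_zero_iff opn_scale opn_triangle opn_M by blast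


lemma opn_le_dual: "op_norm A \<le> num_radius_dual (A::'n::finite cmat)"
proof (rule opn_le[OF dual_nonneg])
  fix x :: "complex^'n"
  show "norm (A *v x) \<le> num_radius_dual A * norm x"
  proof (cases "A *v x = 0")
    case True thus ?thesis using dual_nonneg[of A] by simp
  next
    case False
    have x0: "x \<noteq> 0"
    proof
      assume "x = 0" hence "A *v x = 0" by (simp add: mv_zero)
      with False show False by simp
    qed
    define u where "u = complex_of_real (1 / norm x) *s x"
    have nu: "norm u = 1" using x0 by (simp add: u_def norm_cscale_vec norm_divide)
    have Au: "A *v u = complex_of_real (1 / norm x) *s (A *v x)" by (simp add: u_def mv_cscale_vec)
    have nAu: "norm (A *v u) = norm (A *v x) / norm x" by (simp add: Au norm_cscale_vec norm_divide)
    have Au0: "A *v u \<noteq> 0" using False x0 nAu by auto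
    define y where "y = complex_of_real (1 / norm (A *v u)) *s (A *v u)"
    have ny: "norm y = 1" using Au0 by (simp add: y_def norm_cscale_vec norm_divide)
    have nrX: "num_radius (outer y u) \<le> 1"
    proof (rule nr_least)
      fix v :: "complex^'n" assume nv: "norm v = 1"
      have "cinner v (outer y u *v v) = cinner u v * cinner v y" by (simp add: outer_mv cinner_scale_right)
      hence "cmod (cinner v (outer y u *v v)) = cmod (cinner u v) * cmod (cinner v y)" by (simp add: norm_mult)
      also have "\<dots> \<le> 1 * 1"
      proof (rule mult_mono)
        show "cmod (cinner u v) \<le> 1" using cauchy_schwarz_c[of u v] nu nv by simp
        show "cmod (cinner v y) \<le> 1" using cauchy_schwarz_c[of v y] ny nv by simp
      qed auto
      finally show "cmod (cinner v (outer y u *v v)) \<le> 1" by simp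
    qed
    have tr: "mtrace (cadj A ** outer y u) = complex_of_real (norm (A *v u))"
    proof -
      have "mtrace (cadj A ** outer y u) = cinner u (cadj A *v y)" by (simp add: mult_outer mtrace_outer)
      also have "\<dots> = cinner (A *v u) y" using cinner_adj[of u "cadj A" y] by simp
      also have "\<dots> = complex_of_real (1 / norm (A *v u)) * complex_of_real ((norm (A *v u))\<^sup>2)"
        by (simp add: y_def cinner_scale_right cinner_self)
      also have "\<dots> = complex_of_real (norm (A *v u))"
      proof -
        have "(1 / norm (A *v u)) * (norm (A *v u))\<^sup>2 = norm (A *v u)" using Au0 by (simp add: power2_eq_square)
        thus ?thesis by (metis of_real_mult)
      qed
      finally show ?thesis .
    qed
    have "norm (A *v u) \<le> num_radius_dual A" using dual_upper[OF nrX, of A] tr by simp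
    hence "norm (A *v x) / norm x \<le> num_radius_dual A" using nAu by simp
    thus ?thesis using x0 by (simp add: pos_divide_le_eq)
  qed
qed

section \<open>M-norms below the dual numerical radius\<close>

lemma dual_rank1: "num_radius_dual (outer (c *s e) e) \<le> cmod c" if ne: "norm e = 1" for e :: "complex^'n::finite"
proof (rule dual_least)
  fix Y :: "'n cmat" assume nY: "num_radius Y \<le> 1"
  have "mtrace (cadj (outer (c *s e) e) ** Y) = cnj c * cinner e (Y *v e)"
    by (simp add: trace_adj_outer cinner_scale_left)
  hence "cmod (mtrace (cadj (outer (c *s e) e) ** Y)) = cmod c * cmod (cinner e (Y *v e))" by (simp add: norm_mult)
  also have "\<dots> \<le> cmod c * 1"
    using nr_upper[OF ne, of Y] nY by (intro mult_left_mono) auto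
  finally show "cmod (mtrace (cadj (outer (c *s e) e) ** Y)) \<le> cmod c" by simp
qed

lemma Mnorm_rep:
  fixes N :: "'n::finite cmat \<Rightarrow> real" and Z :: "'z set" and w :: "'z \<Rightarrow> complex^'n" and \<mu> :: "'z \<Rightarrow> complex"
  assumes MN: "is_M_norm N" and Nd: "\<forall>A. N A \<le> num_radius_dual A"
    and fin: "finite Z" and mu: "\<forall>z\<in>Z. cmod (\<mu> z) \<le> 1" and sw: "(\<Sum>z\<in>Z. outer (w z) (w z)) = mat 1"
  shows "N (\<Sum>z\<in>Z. cscale (\<mu> z) (outer (w z) (w z))) \<le> 1"
proof -
  define k where "k = card Z"
  obtain h where h: "bij_betw h {..<k} Z"
    using ex_bij_betw_nat_finite[OF fin] by (auto simp: k_def lessThan_atLeast0)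
  define e :: "complex^'n" where "e = axis undefined 1"
  have ee: "cinner e e = 1" by (simp add: e_def cinner_axis)
  have ne: "norm e = 1" by (simp add: e_def norm_axis_c)
  define C where "C i = outer e (w (h i))" for i
  define X where "X i = cscale (\<mu> (h i)) (outer e e)" for i
  have CC: "cadj (C i) ** C i = outer (w (h i)) (w (h i))" for i
    by (simp add: C_def cadj_outer mult_outer outer_mv ee)
  have CXC: "cadj (C i) ** X i ** C i = cscale (\<mu> (h i)) (outer (w (h i)) (w (h i)))" for i
    by (simp add: C_def X_def cadj_outer mult_outer outer_mv cscale_outer mv_cscale_vec cinner_scale_right ee)
  have sumI: "(\<Sum>i<k. cadj (C i) ** C i) = mat 1"
    unfolding CC using sum.reindex_bij_betw[OF h, of "\<lambda>z. outer (w z) (w z)"] sw by simp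
  have sumA: "(\<Sum>i<k. cadj (C i) ** X i ** C i) = (\<Sum>z\<in>Z. cscale (\<mu> z) (outer (w z) (w z)))"
    unfolding CXC using sum.reindex_bij_betw[OF h, of "\<lambda>z. cscale (\<mu> z) (outer (w z) (w z))"] by simp
  have Mp: "\<And>k (X::nat \<Rightarrow> 'n cmat) C. (\<Sum>i<k. cadj (C i) ** C i) = mat 1 \<Longrightarrow>
              N (\<Sum>i<k. cadj (C i) ** X i ** C i) \<le> Max ((\<lambda>i. N (X i)) ` {..<k})"
    using MN unfolding is_M_norm_def by blast
  have k0: "k \<noteq> 0"
  proof
    assume "k = 0"
    hence "(mat 1::'n cmat) = 0" using sumI by simp
    thus False using mat1_neq0 by blast
  qed
  have NX: "N (X i) \<le> 1" if "i < k" for i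
  proof -
    have hi: "h i \<in> Z" using h that by (auto simp: bij_betw_def)
    have Xi: "X i = outer (\<mu> (h i) *s e) e" by (simp add: X_def cscale_outer)
    have "N (X i) \<le> num_radius_dual (X i)" using Nd by blast
    also have "\<dots> \<le> cmod (\<mu> (h i))" unfolding Xi by (rule dual_rank1[OF ne])
    also have "\<dots> \<le> 1" using mu hi by blast
    finally show ?thesis .
  qed
  have "N (\<Sum>i<k. cadj (C i) ** X i ** C i) \<le> Max ((\<lambda>i. N (X i)) ` {..<k})" by (rule Mp[OF sumI])
  also have "\<dots> \<le> 1" using k0 NX by (subst Max_le_iff) auto
  finally show ?thesis unfolding sumA .
qed

lemma Mnorm_le_opn:
  fixes N :: "'n::finite cmat \<Rightarrow> real"
  assumes MN: "is_M_norm N" and Nd: "\<forall>A. N A \<le> num_radius_dual A"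
  shows "N A \<le> op_norm A"
proof (cases "A = 0")
  case True
  have "N 0 = 0" using MN unfolding is_M_norm_def is_matrix_norm_def by blast
  thus ?thesis using True opn_nonneg[of A] by simp
next
  case False
  define c where "c = op_norm A"
  have c0: "c > 0" using False opn_nonneg[of A] opn_zero_iff[of A] by (simp add: c_def)
  define A' where "A' = cscale (complex_of_real (1/c)) A"
  have contr: "\<forall>x. norm (A' *v x) \<le> norm x"
  proof
    fix x :: "complex^'n"
    have "norm (A' *v x) = (1/c) * norm (A *v x)" using c0 by (simp add: A'_def cscale_mv norm_cscale_vec norm_divide)
    also have "\<dots> \<le> (1/c) * (c * norm x)" using opn_bound[of A x] c0 by (intro mult_left_mono) (auto simp: c_def)
    also have "\<dots> = norm x" using c0 by simp
    finally show "norm (A' *v x) \<le> norm x" .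
  qed
  obtain Z :: "(complex^('n+'n)) set" and \<mu> w where Zf: "finite Z" and Zm: "\<forall>z\<in>Z. cmod (\<mu> z) \<le> 1"
    and Zs: "(\<Sum>z\<in>Z. outer (w z) (w z)) = mat 1" and ZA: "(\<Sum>z\<in>Z. cscale (\<mu> z) (outer (w z) (w z))) = A'"
    using dilation[OF contr] by blast
  have NA': "N A' \<le> 1" using Mnorm_rep[OF MN Nd Zf Zm Zs] ZA by simp
  have "A = cscale (complex_of_real c) A'" using c0
    by (simp add: A'_def cscale_cscale cscale_one flip: of_real_mult)
  hence "N A = cmod (complex_of_real c) * N A'" using MN unfolding is_M_norm_def is_matrix_norm_def by metis
  also have "\<dots> = c * N A'" using c0 by simp
  also have "\<dots> \<le> c * 1" using NA' c0 by (intro mult_left_mono) auto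
  finally show ?thesis by (simp add: c_def)
qed

theorem corollary3p5:
  shows "is_M_norm (op_norm :: 'n::finite cmat \<Rightarrow> real) \<and>
         (\<forall>A::'n cmat. op_norm A \<le> num_radius_dual A) \<and>
         (\<forall>N::'n cmat \<Rightarrow> real. is_M_norm N \<and> (\<forall>A. N A \<le> num_radius_dual A) \<longrightarrow>
             (\<forall>A. N A \<le> op_norm A))"
  using opn_is_M opn_le_dual Mnorm_le_opn by blast


end
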